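(* Let $0<p<1-1/e^2$ be constant, $b=\frac1{1-p}$, and $\gamma(n)=2\log_b n-2\log_b\log_b n-2\log_b 2$. Let $k=k(n)$ be positive integers with $\frac nk-\gamma(n)=O(1)$. Then, as $n\to\infty$, \[\frac{\mu_{n,k+1}}{\mu_{n,k}}\ge(1+o(1))\, b^{\frac{n^2}{2k(k+1)}-\frac{n}{2k}}.\]
   Context: For $n\in\mathbb{N}$ let $m(n)=\lfloor p\binom n2\rfloor$ and $G\sim\mathcal{G}(n,m(n))$, the uniform random graph on $n$ labelled vertices with exactly $m(n)$ edges. An ordered $k$-equipartition of $[n]$ is an ordered partition into $k$ parts each of size $\lceil n/k\rceil$ or $\lfloor n/k\rfloor$, the larger parts listed first. Let $X_{n,k}$ be the number of ordered $k$-equipartitions all of whose parts are independent in $G$, and $\mu_{n,k}=\mathbb{E}[X_{n,k}]$. *)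

theory Defs
  imports Complex_Main "HOL-Library.Landau_Symbols"
begin

definition all_pairs :: "nat \<Rightarrow> nat set set" where
  "all_pairs n = {e. e \<subseteq> {0..<n} \<and> card e = 2}"

text \<open>Support of G(n,m): all edge sets with exactly m edges (uniform distribution).\<close>
definition graphs_nm :: "nat \<Rightarrow> nat \<Rightarrow> nat set set set" where
  "graphs_nm n m = {E. E \<subseteq> all_pairs n \<and> card E = m}"

definition m_of :: "real \<Rightarrow> nat \<Rightarrow> nat" where
  "m_of p n = nat \<lfloor>p * real (n choose 2)\<rfloor>"

definition ordered_equipartition :: "nat \<Rightarrow> nat \<Rightarrow> (nat \<Rightarrow> nat set) \<Rightarrow> bool" where
  "ordered_equipartition n k P \<longleftrightarrow>
     (\<forall>i. i \<ge> k \<longrightarrow> P i = {}) \<and>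
     (\<Union>i<k. P i) = {0..<n} \<and>
     (\<forall>i<k. \<forall>j<k. i \<noteq> j \<longrightarrow> P i \<inter> P j = {}) \<and>
     (\<forall>i<k. card (P i) = nat \<lceil>real n / real k\<rceil> \<or> card (P i) = n div k) \<and>
     (\<forall>i<k. \<forall>j<k. i < j \<longrightarrow> card (P j) \<le> card (P i))"

definition independent_in :: "nat set set \<Rightarrow> nat set \<Rightarrow> bool" where
  "independent_in E S \<longleftrightarrow> (\<forall>e\<in>E. \<not> e \<subseteq> S)"

definition X_count :: "nat \<Rightarrow> nat \<Rightarrow> nat set set \<Rightarrow> nat" where
  "X_count n k E = card {P. ordered_equipartition n k P \<and> (\<forall>i<k. independent_in E (P i))}"

text \<open>mu_{n,k} = E[X_{n,k}] for G ~ G(n, m(n)), m(n) = floor(p * C(n,2)).\<close>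
definition mu :: "real \<Rightarrow> nat \<Rightarrow> nat \<Rightarrow> real" where
  "mu p n k = (\<Sum>E\<in>graphs_nm n (m_of p n). real (X_count n k E)) / real (card (graphs_nm n (m_of p n)))"

end

theory Submission
  imports Defs "HOL-Combinatorics.Multiset_Permutations" "HOL-Real_Asymp.Real_Asymp"
begin


definition sz :: "nat \<Rightarrow> nat \<Rightarrow> nat \<Rightarrow> nat" where
  "sz n k i = (if i < n mod k then n div k + 1 else n div k)"

lemma sum_sz: "k > 0 \<Longrightarrow> (\<Sum>i<k. sz n k i) = n"
proof -
  assume k: "k > 0"
  have r: "n mod k < k" using k by simp
  have "(\<Sum>i<k. sz n k i) = (\<Sum>i<k. n div k + (if i < n mod k then 1 else 0))"
    by (rule sum.cong) (auto simp: sz_def)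
  also have "\<dots> = k * (n div k) + card {i. i < k \<and> i < n mod k}"
    by (simp add: sum.distrib sum.If_cases Int_def)
  also have "{i. i < k \<and> i < n mod k} = {..<n mod k}" using r by auto
  finally show ?thesis by simp
qed

lemma ceil_div: "k > 0 \<Longrightarrow> nat \<lceil>real n / real k\<rceil> = (if n mod k = 0 then n div k else n div k + 1)"
proof -
  assume k: "k > 0"
  have "n = k * (n div k) + n mod k" by simp
  then have "real n = real (k * (n div k) + n mod k)" by (rule arg_cong)
  then have e: "real n = real k * real (n div k) + real (n mod k)" by (simp only: of_nat_add of_nat_mult)
  have e2: "real n / real k = real (n div k) + real (n mod k) / real k"
    using k by (simp add: e add_divide_distrib)
  have r: "n mod k < k" using k by simp
  show ?thesis
  proof (cases "n mod k = 0")
    case True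
    then show ?thesis using e2 by simp
  next
    case False
    have a: "0 < real (n mod k) / real k" using False k by simp
    have b: "real (n mod k) / real k \<le> 1" using r k by simp
    have "\<lceil>real n / real k\<rceil> = int (n div k) + 1"
    proof (rule ceiling_unique)
      show "real_of_int (int (n div k) + 1) - 1 < real n / real k" using a e2 by simp
      show "real n / real k \<le> real_of_int (int (n div k) + 1)" using b e2 by simp
    qed
    then show ?thesis using False by simp
  qed
qed

lemma eqp_card:
  assumes k: "k > 0" and P: "ordered_equipartition n k P" and i: "i < k"
  shows "card (P i) = sz n k i"
proof -
  define q where "q = n div k"
  define r where "r = n mod k"
  have r: "r < k" using k r_def by simp
  have sub: "\<And>i. i < k \<Longrightarrow> P i \<subseteq> {0..<n}" using P unfolding ordered_equipartition_def by blast
  have fin: "\<And>i. i < k \<Longrightarrow> finite (P i)" using sub finite_subset by blast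
  have cards: "\<And>i. i < k \<Longrightarrow> card (P i) = q \<or> card (P i) = q + 1"
    using P ceil_div[OF k, of n] unfolding ordered_equipartition_def q_def by (auto split: if_splits)
  have mono: "\<And>i j. i < j \<Longrightarrow> j < k \<Longrightarrow> card (P j) \<le> card (P i)"
    using P unfolding ordered_equipartition_def by auto
  have disj: "\<And>i j. i < k \<Longrightarrow> j < k \<Longrightarrow> i \<noteq> j \<Longrightarrow> P i \<inter> P j = {}"
    using P unfolding ordered_equipartition_def by auto
  have "n = card (\<Union>i<k. P i)" using P unfolding ordered_equipartition_def by simp
  also have "\<dots> = (\<Sum>i<k. card (P i))"
    by (rule card_UN_disjoint) (auto simp: fin disj)
  also have "\<dots> = (\<Sum>i<k. q + (if card (P i) = q + 1 then 1 else 0))"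
    by (rule sum.cong) (use cards in auto)
  also have "\<dots> = k * q + card {i. i < k \<and> card (P i) = q + 1}"
    by (simp add: sum.distrib sum.If_cases Int_def)
  finally have cnt0: "n = k * q + card {i. i < k \<and> card (P i) = q + 1}" .
  have "n = k * q + r" using div_mult_mod_eq[of n k] unfolding q_def r_def by (simp add: mult.commute)
  then have cnt: "card {i. i < k \<and> card (P i) = q + 1} = r" using cnt0 by linarith
  show ?thesis
  proof (cases "i < r")
    case True
    show ?thesis
    proof (rule ccontr)
      assume "card (P i) \<noteq> sz n k i"
      then have "card (P i) \<noteq> q + 1" using True unfolding sz_def q_def r_def by simp
      then have ci: "card (P i) = q" using cards i by auto
      have "j < i" if "j < k" "card (P j) = q + 1" for j
      proof (rule ccontr)
        assume "\<not> j < i"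
        then have "i = j \<or> i < j" by auto
        then show False using mono[of i j] ci that by auto
      qed
      then have "{j. j < k \<and> card (P j) = q + 1} \<subseteq> {..<i}" by auto
      then have "card {j. j < k \<and> card (P j) = q + 1} \<le> card {..<i}" by (intro card_mono) auto
      then have "card {j. j < k \<and> card (P j) = q + 1} \<le> i" by simp
      then show False using cnt True by simp
    qed
  next
    case False
    show ?thesis
    proof (rule ccontr)
      assume "card (P i) \<noteq> sz n k i"
      then have c: "card (P i) = q + 1" using False cards i unfolding sz_def q_def r_def by auto
      have "card (P j) = q + 1" if "j \<le> i" for j
      proof (cases "j = i")
        case True then show ?thesis using c by simp
      next
        case False
        then have "j < i" using that by simp
        then have "card (P i) \<le> card (P j)" using mono[of j i] i by simp
        then show ?thesis using cards[of j] c \<open>j < i\<close> i by auto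
      qed
      then have "{..i} \<subseteq> {j. j < k \<and> card (P j) = q + 1}" using i by auto
      then have "card {..i} \<le> card {j. j < k \<and> card (P j) = q + 1}" by (intro card_mono) auto
      then show False using cnt False by simp
    qed
  qed
qed



lemma eqp_of_sz:
  assumes k: "k > 0" and e: "\<forall>i. i \<ge> k \<longrightarrow> P i = {}" and u: "(\<Union>i<k. P i) = {0..<n}"
    and d: "\<forall>i<k. \<forall>j<k. i \<noteq> j \<longrightarrow> P i \<inter> P j = {}"
    and c: "\<forall>i<k. card (P i) = sz n k i"
  shows "ordered_equipartition n k P"
  unfolding ordered_equipartition_def
proof (intro conjI)
  show "\<forall>i<k. card (P i) = nat \<lceil>real n / real k\<rceil> \<or> card (P i) = n div k"
    using c ceil_div[OF k, of n] by (auto simp: sz_def)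
  show "\<forall>i<k. \<forall>j<k. i < j \<longrightarrow> card (P j) \<le> card (P i)"
    using c by (auto simp: sz_def)
qed (use e u d in auto)

definition mA :: "nat \<Rightarrow> nat \<Rightarrow> nat multiset" where
  "mA n k = (\<Sum>i<k. replicate_mset (sz n k i) i)"

lemma count_mA: "count (mA n k) j = (if j < k then sz n k j else 0)"
proof -
  have "count (mA n k) j = (\<Sum>i<k. if i = j then sz n k i else 0)"
    unfolding mA_def count_sum by (intro sum.cong) auto
  also have "\<dots> = (if j < k then sz n k j else 0)" by (simp add: sum.delta)
  finally show ?thesis .
qed

lemma size_mA: "k > 0 \<Longrightarrow> size (mA n k) = n"
  unfolding mA_def by (simp add: sum_sz)

definition phi :: "nat list \<Rightarrow> nat \<Rightarrow> nat set" where
  "phi xs = (\<lambda>i. {j. j < length xs \<and> xs ! j = i})"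

lemma card_phi: "card (phi xs i) = count (mset xs) i"
proof -
  have "card (phi xs i) = length (filter ((=) i) xs)"
    unfolding phi_def length_filter_conv_card by (metis (no_types, lifting))
  then show ?thesis by (simp add: count_mset count_list_eq_length_filter)
qed

lemma phi_eqp:
  assumes k: "k > 0" and xs: "mset xs = mA n k"
  shows "ordered_equipartition n k (phi xs)"
proof -
  have len: "length xs = n" using xs size_mA[OF k, of n] by (metis size_mset)
  have lt: "xs ! j < k" if "j < length xs" for j
  proof -
    have "xs ! j \<in># mset xs" using that by simp
    then have "count (mA n k) (xs ! j) > 0" using xs by (simp del: set_mset_mset)
    then show ?thesis using count_mA by (auto split: if_splits)
  qed
  show ?thesis
  proof (rule eqp_of_sz[OF k])
    show "\<forall>i. i \<ge> k \<longrightarrow> phi xs i = {}" using lt unfolding phi_def by force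
    show "(\<Union>i<k. phi xs i) = {0..<n}" using lt len unfolding phi_def by auto
    show "\<forall>i<k. \<forall>j<k. i \<noteq> j \<longrightarrow> phi xs i \<inter> phi xs j = {}" unfolding phi_def by auto
    show "\<forall>i<k. card (phi xs i) = sz n k i" using xs by (simp add: card_phi count_mA)
  qed
qed

lemma phi_inj: "inj_on phi (permutations_of_multiset (mA n k))"
proof (rule inj_onI)
  fix xs ys assume a: "xs \<in> permutations_of_multiset (mA n k)" "ys \<in> permutations_of_multiset (mA n k)"
    and e: "phi xs = phi ys"
  have "length xs = length ys" using a by (metis permutations_of_multisetD size_mset)
  moreover have "xs ! j = ys ! j" if "j < length xs" for j
  proof -
    have "j \<in> phi xs (xs ! j)" using that unfolding phi_def by simp
    then have "j \<in> phi ys (xs ! j)" using e by simp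
    then show ?thesis unfolding phi_def by simp
  qed
  ultimately show "xs = ys" by (rule nth_equalityI)
qed

lemma phi_surj:
  assumes k: "k > 0" and P: "ordered_equipartition n k P"
  shows "P \<in> phi ` permutations_of_multiset (mA n k)"
proof -
  define xs where "xs = map (\<lambda>j. THE i. i < k \<and> j \<in> P i) [0..<n]"
  have u: "(\<Union>i<k. P i) = {0..<n}" and e: "\<forall>i. i \<ge> k \<longrightarrow> P i = {}"
    and d: "\<forall>i<k. \<forall>j<k. i \<noteq> j \<longrightarrow> P i \<inter> P j = {}"
    using P unfolding ordered_equipartition_def by auto
  have the1: "(THE i. i < k \<and> j \<in> P i) = i" if "i < k" "j \<in> P i" for i j
  proof (rule the_equality)
    show "i < k \<and> j \<in> P i" using that by simp
    fix i' assume "i' < k \<and> j \<in> P i'"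
    then show "i' = i" using d that by blast
  qed
  have ex: "\<exists>i<k. j \<in> P i" if "j < n" for j using u that by auto
  have ph: "phi xs = P"
  proof
    fix i
    show "phi xs i = P i"
    proof (cases "i < k")
      case True
      show ?thesis
      proof
        show "phi xs i \<subseteq> P i"
        proof
          fix j assume "j \<in> phi xs i"
          then have j: "j < n" "(THE i. i < k \<and> j \<in> P i) = i" unfolding phi_def xs_def by auto
          obtain i' where "i' < k" "j \<in> P i'" using ex[OF j(1)] by blast
          then show "j \<in> P i" using j(2) the1 by metis
        qed
        show "P i \<subseteq> phi xs i"
        proof
          fix j assume j: "j \<in> P i"
          then have "j < n" using u True by auto
          then show "j \<in> phi xs i" unfolding phi_def xs_def using the1[OF True j] by simp
        qed
      qed
    next
      case False
      have "phi xs i = {}"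
      proof (rule ccontr)
        assume "phi xs i \<noteq> {}"
        then obtain j where "j \<in> phi xs i" by blast
        then have j: "j < n" "(THE i. i < k \<and> j \<in> P i) = i" unfolding phi_def xs_def by auto
        obtain i' where "i' < k" "j \<in> P i'" using ex[OF j(1)] by blast
        then show False using j(2) the1 False by metis
      qed
      then show ?thesis using e False by simp
    qed
  qed
  have "mset xs = mA n k"
  proof (rule multiset_eqI)
    fix i
    have "count (mset xs) i = card (P i)" using card_phi[of xs i] ph by simp
    also have "\<dots> = count (mA n k) i"
      using eqp_card[OF k P] e by (simp add: count_mA)
    finally show "count (mset xs) i = count (mA n k) i" .
  qed
  then show ?thesis using ph by (metis image_eqI permutations_of_multisetI)
qed

lemma card_EQ:
  assumes k: "k > 0"
  shows "card {P. ordered_equipartition n k P} * (\<Prod>i<k. fact (sz n k i)) = (fact n :: nat)"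
proof -
  have b: "bij_betw phi (permutations_of_multiset (mA n k)) {P. ordered_equipartition n k P}"
    unfolding bij_betw_def
  proof
    show "inj_on phi (permutations_of_multiset (mA n k))" by (rule phi_inj)
    show "phi ` permutations_of_multiset (mA n k) = {P. ordered_equipartition n k P}"
      using phi_eqp[OF k] phi_surj[OF k] permutations_of_multisetD by blast
  qed
  have c1: "card {P. ordered_equipartition n k P} = card (permutations_of_multiset (mA n k))"
    using bij_betw_same_card[OF b] by simp
  have sm: "set_mset (mA n k) = {i. i < k \<and> 0 < sz n k i}"
    by (auto simp: count_mA simp flip: count_greater_zero_iff split: if_splits)
  have "(\<Prod>x\<in>set_mset (mA n k). fact (count (mA n k) x)) = (\<Prod>i\<in>{i. i < k \<and> 0 < sz n k i}. fact (sz n k i))"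
    unfolding sm by (intro prod.cong) (auto simp: count_mA)
  also have "\<dots> = (\<Prod>i<k. fact (sz n k i))"
    by (intro prod.mono_neutral_left) auto
  finally have pe: "(\<Prod>x\<in>set_mset (mA n k). fact (count (mA n k) x)) = (\<Prod>i<k. fact (sz n k i))" .
  have X: "card (permutations_of_multiset (mA n k)) * (\<Prod>x\<in>set_mset (mA n k). fact (count (mA n k) x)) = fact n"
    using card_permutations_of_multiset_aux[of "mA n k"] size_mA[OF k, of n] by simp
  show ?thesis unfolding c1 pe[symmetric] using X .
qed



definition Fk :: "nat \<Rightarrow> nat \<Rightarrow> nat" where
  "Fk n k = (\<Sum>i<k. sz n k i choose 2)"

lemma finite_all_pairs: "finite (all_pairs n)"
  unfolding all_pairs_def by (rule finite_subset[of _ "Pow {0..<n}"]) auto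

lemma card_all_pairs: "card (all_pairs n) = n choose 2"
  unfolding all_pairs_def using n_subsets[of "{0..<n}" 2] by simp

lemma card_graphs: "card (graphs_nm n m) = (n choose 2) choose m"
  unfolding graphs_nm_def using n_subsets[OF finite_all_pairs[of n], of m] card_all_pairs[of n] by simp

lemma finite_graphs: "finite (graphs_nm n m)"
  unfolding graphs_nm_def by (rule finite_subset[of _ "Pow (all_pairs n)"]) (auto simp: finite_all_pairs)

lemma finite_EQ: "k > 0 \<Longrightarrow> finite {P. ordered_equipartition n k P}"
proof (rule ccontr)
  assume k: "k > 0" and "infinite {P. ordered_equipartition n k P}"
  then have "card {P. ordered_equipartition n k P} = 0" by simp
  then show False using card_EQ[OF k, of n] by simp
qed

lemma card_indep:
  assumes k: "k > 0" and P: "ordered_equipartition n k P"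
  shows "card {E \<in> graphs_nm n m. \<forall>i<k. independent_in E (P i)} = ((n choose 2) - Fk n k) choose m"
proof -
  define inside where "inside = {e \<in> all_pairs n. \<exists>i<k. e \<subseteq> P i}"
  define cross where "cross = all_pairs n - inside"
  have sub: "\<And>i. i < k \<Longrightarrow> P i \<subseteq> {0..<n}" using P unfolding ordered_equipartition_def by blast
  have fin: "\<And>i. i < k \<Longrightarrow> finite (P i)" using sub finite_subset by blast
  have disj: "\<And>i j. i < k \<Longrightarrow> j < k \<Longrightarrow> i \<noteq> j \<Longrightarrow> P i \<inter> P j = {}"
    using P unfolding ordered_equipartition_def by auto
  have ins: "inside = (\<Union>i<k. {e. e \<subseteq> P i \<and> card e = 2})"
    unfolding inside_def all_pairs_def using sub by blast
  have "card inside = (\<Sum>i<k. card {e. e \<subseteq> P i \<and> card e = 2})"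
    unfolding ins
  proof (rule card_UN_disjoint)
    show "finite {..<k}" by simp
    show "\<forall>i\<in>{..<k}. finite {e. e \<subseteq> P i \<and> card e = 2}"
      using fin by (auto intro: finite_subset[of _ "Pow (P _)"])
    show "\<forall>i\<in>{..<k}. \<forall>j\<in>{..<k}. i \<noteq> j \<longrightarrow> {e. e \<subseteq> P i \<and> card e = 2} \<inter> {e. e \<subseteq> P j \<and> card e = 2} = {}"
    proof (intro ballI impI)
      fix i j assume ij: "i \<in> {..<k}" "j \<in> {..<k}" "i \<noteq> j"
      show "{e. e \<subseteq> P i \<and> card e = 2} \<inter> {e. e \<subseteq> P j \<and> card e = 2} = {}"
      proof (rule ccontr)
        assume "\<not> ?thesis"
        then obtain e where "e \<subseteq> P i" "e \<subseteq> P j" "card e = 2" by blast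
        then have "e = {}" using disj[of i j] ij by auto
        then show False using \<open>card e = 2\<close> by simp
      qed
    qed
  qed
  also have "\<dots> = (\<Sum>i<k. card (P i) choose 2)"
    by (intro sum.cong refl) (simp add: n_subsets fin)
  also have "\<dots> = Fk n k" unfolding Fk_def by (intro sum.cong refl) (simp add: eqp_card[OF k P])
  finally have ci: "card inside = Fk n k" .
  have isub: "inside \<subseteq> all_pairs n" unfolding inside_def by blast
  have ifin: "finite inside" using finite_subset[OF isub finite_all_pairs] .
  have cc: "card cross = (n choose 2) - Fk n k"
    unfolding cross_def using ci card_all_pairs[of n] card_Diff_subset[OF ifin isub] by simp
  have "{E \<in> graphs_nm n m. \<forall>i<k. independent_in E (P i)} = {E. E \<subseteq> cross \<and> card E = m}"
    unfolding graphs_nm_def cross_def inside_def independent_in_def by blast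
  also have "card \<dots> = card cross choose m"
    by (rule n_subsets) (simp add: cross_def finite_all_pairs)
  finally show ?thesis using cc by simp
qed

lemma mu_formula:
  assumes k: "k > 0"
  shows "mu p n k * real (card (graphs_nm n (m_of p n))) =
    real (card {P. ordered_equipartition n k P}) * real (((n choose 2) - Fk n k) choose (m_of p n))"
proof -
  define G where "G = graphs_nm n (m_of p n)"
  define EQ where "EQ = {P. ordered_equipartition n k P}"
  have fG: "finite G" unfolding G_def by (rule finite_graphs)
  have fE: "finite EQ" unfolding EQ_def using finite_EQ[OF k] .
  have "(\<Sum>E\<in>G. real (X_count n k E)) = (\<Sum>E\<in>G. \<Sum>P\<in>EQ. if (\<forall>i<k. independent_in E (P i)) then 1 else 0)"
  proof (intro sum.cong refl)
    fix E
    have "X_count n k E = card {P \<in> EQ. \<forall>i<k. independent_in E (P i)}"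
      unfolding X_count_def EQ_def by simp
    also have "real \<dots> = (\<Sum>P\<in>EQ. if (\<forall>i<k. independent_in E (P i)) then 1 else 0)"
      using fE by (simp add: sum.inter_filter[symmetric])
    finally show "real (X_count n k E) = (\<Sum>P\<in>EQ. if (\<forall>i<k. independent_in E (P i)) then 1 else 0)" .
  qed
  also have "\<dots> = (\<Sum>P\<in>EQ. \<Sum>E\<in>G. if (\<forall>i<k. independent_in E (P i)) then 1 else 0)"
    by (rule sum.swap)
  also have "\<dots> = (\<Sum>P\<in>EQ. real (((n choose 2) - Fk n k) choose (m_of p n)))"
  proof (intro sum.cong refl)
    fix P assume "P \<in> EQ"
    then have P: "ordered_equipartition n k P" unfolding EQ_def by simp
    have "(\<Sum>E\<in>G. if (\<forall>i<k. independent_in E (P i)) then 1 else 0) = real (card {E \<in> G. \<forall>i<k. independent_in E (P i)})"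
      using fG by (simp add: sum.inter_filter[symmetric])
    also have "\<dots> = real (((n choose 2) - Fk n k) choose (m_of p n))"
      unfolding G_def using card_indep[OF k P] by simp
    finally show "(\<Sum>E\<in>G. if (\<forall>i<k. independent_in E (P i)) then 1 else (0::real)) = real (((n choose 2) - Fk n k) choose (m_of p n))" .
  qed
  also have "\<dots> = real (card EQ) * real (((n choose 2) - Fk n k) choose (m_of p n))" by simp
  finally have S: "(\<Sum>E\<in>G. real (X_count n k E)) = real (card EQ) * real (((n choose 2) - Fk n k) choose (m_of p n))" .
  show ?thesis
  proof (cases "card G = 0")
    case True
    then have "G = {}" using fG by simp
    then show ?thesis using S unfolding mu_def G_def EQ_def by simp
  next
    case False
    then show ?thesis using S unfolding mu_def G_def EQ_def by simp
  qed
qed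



lemma next_qr1:
  fixes n k :: nat
  assumes k: "k > 0" and qr: "n div k \<le> n mod k"
  shows "n div (k+1) = n div k" "n mod (k+1) = n mod k - n div k"
proof -
  define q where "q = n div k"
  define r where "r = n mod k"
  have r: "r < k" using k r_def by simp
  have n: "n = q * k + r" unfolding q_def r_def by simp
  define t where "t = r - q"
  have t: "t < k + 1" using r t_def by simp
  have n2: "n = t + q * (k+1)" using n qr unfolding t_def q_def r_def by (simp add: algebra_simps)
  have "n div (k+1) = q" using div_mult_self1[of "k+1" t q] n2 t by simp
  then show "n div (k+1) = n div k" using q_def by simp
  have "n mod (k+1) = t" using mod_mult_self1[of t q "k+1"] n2 t by simp
  then show "n mod (k+1) = n mod k - n div k" using q_def r_def t_def by simp
qed

lemma next_qr2:
  fixes n k :: nat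
  assumes k: "k > 0" and qr: "n mod k < n div k" and qk: "n div k \<le> k"
  shows "n div (k+1) = n div k - 1" "n mod (k+1) = n mod k + k + 1 - n div k"
proof -
  define q where "q = n div k"
  define r where "r = n mod k"
  have n: "n = q * k + r" unfolding q_def r_def by simp
  obtain d where d: "q = r + d + 1" using qr unfolding q_def r_def by (metis add.commute add_Suc less_imp_Suc_add plus_1_eq_Suc)
  define t where "t = r + k + 1 - q"
  have t: "t < k + 1" using qr unfolding t_def q_def r_def by simp
  have n2: "n = t + (q - 1) * (k+1)" using n qk d unfolding t_def q_def[symmetric] by (simp add: algebra_simps)
  have "n div (k+1) = q - 1" using div_mult_self1[of "k+1" t "q-1"] n2 t by simp
  then show "n div (k+1) = n div k - 1" using q_def by simp
  have "n mod (k+1) = t" using mod_mult_self1[of t "q-1" "k+1"] n2 t by simp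
  then show "n mod (k+1) = n mod k + k + 1 - n div k" using q_def r_def t_def by simp
qed

definition Pk :: "nat \<Rightarrow> nat \<Rightarrow> nat" where
  "Pk n k = (\<Prod>i<k. fact (sz n k i))"

lemma prod_if_split: "r \<le> k \<Longrightarrow> (\<Prod>i<k. if i < r then (a::nat) else b) = a ^ r * b ^ (k - r)"
proof -
  assume rk: "r \<le> k"
  have "{..<k} = {..<r} \<union> {r..<k}" using rk by auto
  then have "(\<Prod>i<k. if i < r then a else b) = (\<Prod>i\<in>{..<r}. if i < r then a else b) * (\<Prod>i\<in>{r..<k}. if i < r then a else b)"
    by (simp add: prod.union_disjoint ivl_disj_int_one(2))
  also have "\<dots> = a ^ r * b ^ (k - r)" by simp
  finally show ?thesis .
qed

lemma sum_if_split: "r \<le> k \<Longrightarrow> (\<Sum>i<k. if i < r then (a::nat) else b) = r * a + (k - r) * b"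
proof -
  assume rk: "r \<le> k"
  have "{..<k} = {..<r} \<union> {r..<k}" using rk by auto
  then have "(\<Sum>i<k. if i < r then a else b) = (\<Sum>i\<in>{..<r}. if i < r then a else b) + (\<Sum>i\<in>{r..<k}. if i < r then a else b)"
    by (simp add: sum.union_disjoint ivl_disj_int_one(2))
  also have "\<dots> = r * a + (k - r) * b" by simp
  finally show ?thesis .
qed

lemma Pk_formula: "k > 0 \<Longrightarrow> Pk n k = fact (n div k + 1) ^ (n mod k) * fact (n div k) ^ (k - n mod k)"
  unfolding Pk_def sz_def
  by (subst prod_if_split[symmetric]) (auto intro!: prod.cong simp: less_imp_le)

lemma two_choose: "2 * (m choose 2) + m = m * m"
proof (induction m)
  case 0 then show ?case by simp
next
  case (Suc m)
  have "Suc m choose 2 = (m choose 1) + (m choose 2)"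
    by (metis Suc_1 binomial_Suc_Suc)
  then show ?case using Suc by (simp add: algebra_simps)
qed

lemma Fk_formula: "k > 0 \<Longrightarrow> k * (2 * Fk n k + n) = n * n + (n mod k) * (k - n mod k)"
proof -
  assume k: "k > 0"
  define q where "q = n div k"
  define r where "r = n mod k"
  have r: "r < k" using k r_def by simp
  have n: "n = q * k + r" unfolding q_def r_def by simp
  have "2 * Fk n k + n = (\<Sum>i<k. 2 * (sz n k i choose 2) + sz n k i)"
    unfolding Fk_def by (simp add: sum.distrib sum_distrib_left sum_sz[OF k])
  also have "\<dots> = (\<Sum>i<k. sz n k i * sz n k i)" by (simp add: two_choose)
  also have "\<dots> = (\<Sum>i<k. if i < r then (q+1)*(q+1) else q * q)"
    unfolding sz_def q_def r_def by (intro sum.cong) auto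
  also have "\<dots> = r * ((q+1)*(q+1)) + (k - r) * (q * q)" using r by (simp add: sum_if_split)
  finally have S: "2 * Fk n k + n = r * ((q+1)*(q+1)) + (k - r) * (q * q)" .
  obtain s where s: "k = r + s" using r by (metis less_imp_add_positive)
  have "k * (r * ((q+1)*(q+1)) + (k - r) * (q * q)) = n * n + r * (k - r)"
    unfolding n s by (simp add: algebra_simps)
  then show ?thesis using S r_def by simp
qed



lemma fact_le_pow_nat: "fact m \<le> (m::nat) ^ m"
  using fact_le_power[of m, where 'a=nat] by (simp only: of_nat_id)

lemma aux_pow1: "(a::nat)^t * b^(q+u+2) = (a^t * b^(u+1) * b^q) * b"
  by (simp add: power_add mult_ac)

lemma aux_pow2: "(a::nat) = c * b \<Longrightarrow> a^(q+t) * b^(u+1) = (a^t * b^(u+1) * b^q) * c^q"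
  by (simp add: power_add power_mult_distrib mult_ac)

lemma aux_pow3: "(x::nat)^(r+e+1) * f^(d+1) = (x^(r+e+1) * f^d) * f"
  by (simp add: power_add mult_ac)

lemma aux_pow4: "(x::nat) = q * f \<Longrightarrow> (c*x)^r * x^(d+1+e) = (x^(r+e+1) * f^d) * (q^d * c^r)"
  by (simp only: power_mult_distrib power_add mult_ac)

lemma Pk_mono:
  assumes k: "k > 0" and qk: "n div k < k"
  shows "Pk n (k+1) \<le> Pk n k"
proof -
  define q where "q = n div k"
  define r where "r = n mod k"
  have r: "r < k" using k r_def by simp
  have k1: "k + 1 > 0" by simp
  have L0: "Pk n (k+1) = fact (n div (k+1) + 1) ^ (n mod (k+1)) * fact (n div (k+1)) ^ (k + 1 - n mod (k+1))"
    by (rule Pk_formula[OF k1])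
  have R0: "Pk n k = fact (q + 1) ^ r * fact q ^ (k - r)"
    unfolding q_def r_def by (rule Pk_formula[OF k])
  show ?thesis
  proof (cases "q \<le> r")
    case True
    have q1: "n div (k+1) = q" "n mod (k+1) = r - q" using next_qr1[OF k] True q_def r_def by auto
    obtain t where t: "r = q + t" using True le_Suc_ex by blast
    obtain u where u: "k = r + u + 1" using less_imp_Suc_add[OF r] by auto
    have e1: "r - q = t" "k + 1 - (r - q) = q + u + 2" "k - r = u + 1" "k + 1 - t = q + u + 2" using t u by auto
    have L: "Pk n (k+1) = fact (q+1) ^ t * fact q ^ (q + u + 2)"
      using L0 unfolding q1 e1 .
    have R: "Pk n k = fact (q+1) ^ (q + t) * fact q ^ (u + 1)"
      using R0 unfolding e1(3) unfolding t .
    define A :: nat where "A = fact (q+1) ^ t * fact q ^ (u + 1) * fact q ^ q"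
    have L2: "Pk n (k+1) = A * fact q" unfolding L A_def by (rule aux_pow1)
    have R2: "Pk n k = A * (q+1) ^ q" unfolding R A_def
      by (rule aux_pow2) (simp add: fact_Suc)
    have "fact q \<le> q ^ q" by (rule fact_le_pow_nat)
    also have "\<dots> \<le> (q+1) ^ q" by (rule power_mono) auto
    finally have "fact q \<le> (q+1) ^ q" .
    then show ?thesis unfolding L2 R2 by simp
  next
    case False
    then have rq: "r < q" by simp
    have q1: "n div (k+1) = q - 1" "n mod (k+1) = r + k + 1 - q"
      using next_qr2[OF k] rq qk q_def r_def by auto
    obtain d where d: "q = r + d + 1" using less_imp_Suc_add[OF rq] by auto
    have "q \<le> k" using qk q_def by simp
    then obtain e where e: "k = q + e" using le_Suc_ex by blast
    have e1: "q - 1 + 1 = q" "r + k + 1 - q = r + e + 1" "k + 1 - (r + k + 1 - q) = d + 1"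
      "q - 1 = r + d" "k - r = d + 1 + e" "k + 1 - (r + e + 1) = d + 1" "r + d + 1 = q" using d e by auto
    define f :: nat where "f = fact (r + d)"
    have fq: "fact q = q * f" unfolding f_def d by simp
    have L: "Pk n (k+1) = fact q ^ (r + e + 1) * f ^ (d + 1)"
      using L0 unfolding q1 e1 f_def .
    have R: "Pk n k = fact (q+1) ^ r * fact q ^ (d + 1 + e)"
      using R0 unfolding e1 .
    have fq1: "fact (q+1) = (q+1) * fact q" by (simp add: fact_Suc)
    define A :: nat where "A = fact q ^ (r + e + 1) * f ^ d"
    have L2: "Pk n (k+1) = A * f" unfolding L A_def by (rule aux_pow3)
    have R2: "Pk n k = A * (q ^ d * (q+1) ^ r)" unfolding R A_def fq1
      by (rule aux_pow4[OF fq])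
    have "f \<le> (r+d) ^ (r+d)" unfolding f_def by (rule fact_le_pow_nat)
    also have "\<dots> \<le> q ^ (r + d)" using d by (intro power_mono) auto
    also have "\<dots> = q ^ d * q ^ r" by (simp add: power_add)
    also have "\<dots> \<le> q ^ d * (q+1) ^ r" by (intro mult_le_mono2 power_mono) auto
    finally show ?thesis unfolding L2 R2 by simp
  qed
qed

lemma key_nat_ineq:
  fixes n k :: nat
  assumes k: "k > 0" and qk: "n div k < k"
  shows "k * ((n mod (k+1)) * (k + 1 - n mod (k+1))) \<le> (k+1) * (n + (n mod k) * (k - n mod k))"
proof -
  define q where "q = n div k"
  define r where "r = n mod k"
  have r: "r < k" using k r_def by simp
  have n: "n = q * k + r" unfolding q_def r_def by simp
  show ?thesis
  proof (cases "q \<le> r")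
    case True
    have q1: "n mod (k+1) = r - q" using next_qr1[OF k] True q_def r_def by auto
    obtain t where t: "r = q + t" using True le_Suc_ex by blast
    obtain u where u: "k = r + u + 1" using less_imp_Suc_add[OF r] by auto
    have tk: "t \<le> k + 1" using t u by simp
    have a1: "k * t * q \<le> (k+1) * (q * k)"
    proof -
      have "k * t * q \<le> k * (k+1) * q" using tk by (intro mult_le_mono1 mult_le_mono2)
      then show ?thesis by (simp add: algebra_simps)
    qed
    have a2: "k * (t * (u + 2)) \<le> (k+1) * (q + t + (q+t) * (u+1))"
    proof -
      have "t * (u + 2) \<le> q + t + (q+t) * (u+1)" by (simp add: algebra_simps)
      then show ?thesis by (intro mult_le_mono) auto
    qed
    have lhs: "k * ((n mod (k+1)) * (k + 1 - n mod (k+1))) = k * t * q + k * (t * (u + 2))"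
      unfolding q1 using t u by (simp add: algebra_simps)
    have rhs: "(k+1) * (n + (n mod k) * (k - n mod k)) = (k+1) * (q * k) + (k+1) * (q + t + (q+t) * (u+1))"
      unfolding r_def[symmetric] using n t u by (simp add: algebra_simps)
    show ?thesis unfolding lhs rhs using a1 a2 by linarith
  next
    case False
    then have rq: "r < q" by simp
    have q1: "n mod (k+1) = r + k + 1 - q"
      using next_qr2[OF k] rq qk q_def r_def by auto
    obtain d where d: "q = r + d + 1" using less_imp_Suc_add[OF rq] by auto
    have "q \<le> k" using qk q_def by simp
    then obtain e where e: "k = q + e" using le_Suc_ex by blast
    have lhs: "k * ((n mod (k+1)) * (k + 1 - n mod (k+1))) = k * ((r + e + 1) * (d + 1))"
      unfolding q1 using d e by simp
    have "(r + e + 1) * (d + 1) \<le> k * q" using d e by (intro mult_le_mono) auto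
    then have "k * ((r + e + 1) * (d + 1)) \<le> k * (k * q)" by (rule mult_le_mono2)
    also have "\<dots> \<le> (k+1) * (q * k)" by (simp add: algebra_simps)
    also have "\<dots> \<le> (k+1) * (n + (n mod k) * (k - n mod k))"
      using n by (intro mult_le_mono2) simp
    finally show ?thesis unfolding lhs .
  qed
qed



lemma binom_grow:
  fixes M D m N :: nat
  assumes mM: "m \<le> M" and MN: "M + D \<le> N" and mN: "m < N"
  shows "real (M choose m) * (real N / real (N - m)) ^ D \<le> real ((M + D) choose m)"
  using MN
proof (induction D)
  case 0 then show ?case by simp
next
  case (Suc D)
  define X where "X = M + D + 1"
  have XN: "X \<le> N" using Suc.prems X_def by simp
  have mX: "m < X" using mM X_def by simp
  have ab: "(X - m) * (X choose m) = X * ((X - 1) choose m)" by (rule binomial_absorb_comp)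
  have X1: "X - 1 = M + D" using X_def by simp
  have abr: "(real X - real m) * real (X choose m) = real X * real ((M + D) choose m)"
    using arg_cong[OF ab, of real] mX X1 by (simp add: of_nat_diff)
  define c0 where "c0 = real ((M + D) choose m)"
  define c1 where "c1 = real (X choose m)"
  have c0: "c0 \<ge> 0" unfolding c0_def by simp
  have Xm: "real X - real m > 0" using mX by simp
  have Nm: "real N - real m > 0" using mN by simp
  have c1eq: "c1 = real X * c0 / (real X - real m)" using abr Xm unfolding c0_def c1_def by (simp add: field_simps)
  have fr: "real N / (real N - real m) \<le> real X / (real X - real m)"
  proof -
    have "real N * (real X - real m) \<le> real X * (real N - real m)"
      using XN mX by (simp add: algebra_simps mult_right_mono)
    then show ?thesis using Xm Nm by (simp add: field_simps)
  qed
  have step: "c0 * (real N / (real N - real m)) \<le> c1"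
  proof -
    have "c0 * (real N / (real N - real m)) \<le> c0 * (real X / (real X - real m))"
      using fr c0 by (rule mult_left_mono)
    also have "\<dots> = c1" using c1eq by simp
    finally show ?thesis .
  qed
  have rN: "real (N - m) = real N - real m" using mN by (simp add: of_nat_diff)
  have r0: "real N / real (N - m) \<ge> 0" by simp
  have "real (M choose m) * (real N / real (N - m)) ^ Suc D = (real (M choose m) * (real N / real (N - m)) ^ D) * (real N / real (N - m))"
    by simp
  also have "\<dots> \<le> c0 * (real N / real (N - m))"
    using Suc.IH Suc.prems r0 unfolding c0_def by (intro mult_right_mono) auto
  also have "\<dots> \<le> c1" using step rN by simp
  finally show ?case unfolding c1_def X_def by simp
qed

lemma Fk_diff:
  assumes k: "k > 0" and qk: "n div k < k"
  shows "real (Fk n k) - real (Fk n (k+1)) \<ge> (real n)^2 / (2 * real k * real (k+1)) - real n / (2 * real k)"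
proof -
  define A where "A = (n mod k) * (k - n mod k)"
  define B where "B = (n mod (k+1)) * (k + 1 - n mod (k+1))"
  have h1n: "k * (2 * Fk n k + n) = n * n + A" using Fk_formula[OF k] A_def by simp
  have h2n: "(k+1) * (2 * Fk n (k+1) + n) = n * n + B" using Fk_formula[of "k+1" n] B_def by simp
  have h3n: "k * B \<le> (k+1) * (n + A)" using key_nat_ineq[OF k qk] A_def B_def by simp
  have h1: "real k * (2 * real (Fk n k) + real n) = real n * real n + real A"
    using arg_cong[OF h1n, of real] by simp
  have h2: "(real k + 1) * (2 * real (Fk n (k+1)) + real n) = real n * real n + real B"
    using arg_cong[OF h2n, of real] by (simp add: algebra_simps)
  have h3: "real k * real B \<le> (real k + 1) * (real n + real A)"
    using h3n by (metis of_nat_add of_nat_le_iff of_nat_mult of_nat_1)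
  have key: "2 * real k * (real k + 1) * (real (Fk n k) - real (Fk n (k+1))) =
      (real k + 1) * (real n * real n + real A) - real k * (real n * real n + real B)"
  proof -
    have "(real k + 1) * (real k * (2 * real (Fk n k) + real n)) - real k * ((real k + 1) * (2 * real (Fk n (k+1)) + real n))
      = (real k + 1) * (real n * real n + real A) - real k * (real n * real n + real B)"
      by (simp only: h1 h2)
    then show ?thesis by (simp add: algebra_simps)
  qed
  have kp: "2 * real k * (real k + 1) > 0" using k by simp
  have "2 * real k * (real k + 1) * ((real n)^2 / (2 * real k * real (k+1)) - real n / (2 * real k))
      = (real n)^2 - (real k + 1) * real n"
  proof -
    have a: "2 * real k * (real k + 1) * ((real n)^2 / (2 * real k * real (k + 1))) = (real n)^2"
      using k by (simp add: add.commute)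
    have b: "2 * real k * (real k + 1) * (real n / (2 * real k)) = (real k + 1) * real n"
      using k by simp
    show ?thesis unfolding right_diff_distrib a b by (rule refl)
  qed
  also have "\<dots> \<le> 2 * real k * (real k + 1) * (real (Fk n k) - real (Fk n (k+1)))"
    unfolding key using h3 by (simp add: algebra_simps power2_eq_square)
  finally show ?thesis using kp by (simp add: mult_le_cancel_left_pos)
qed



lemma m_of_bounds:
  assumes p: "0 < p" "p < 1"
  shows "real (m_of p n) \<le> p * real (n choose 2)" "real (m_of p n) > p * real (n choose 2) - 1"
proof -
  have nn: "p * real (n choose 2) \<ge> 0" using p by simp
  have "real (m_of p n) = real_of_int \<lfloor>p * real (n choose 2)\<rfloor>"
    unfolding m_of_def using nn by simp
  then show "real (m_of p n) \<le> p * real (n choose 2)" "real (m_of p n) > p * real (n choose 2) - 1"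
    by linarith+
qed

lemma ratio_bound:
  fixes p :: real and n k :: nat
  assumes p: "0 < p" "p < 1" and k: "k > 0" and qk: "n div k < k"
    and mle: "m_of p n + Fk n k \<le> n choose 2"
    and E0: "0 \<le> (real n)^2 / (2 * real k * real (k+1)) - real n / (2 * real k)"
    and N0: "n choose 2 > 0"
  shows "mu p n (k+1) / mu p n k \<ge>
    (1 - ((real n)^2 / (2 * real k * real (k+1)) - real n / (2 * real k)) / ((1 - p) * real (n choose 2)))
      * (1 / (1 - p)) powr ((real n)^2 / (2 * real k * real (k+1)) - real n / (2 * real k))"
proof -
  define E where "E = (real n)^2 / (2 * real k * real (k+1)) - real n / (2 * real k)"
  define N where "N = n choose 2"
  define m where "m = m_of p n"
  define b where "b = 1 / (1 - p)"
  define Fc where "Fc = Fk n k"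
  define Fa where "Fa = Fk n (k+1)"
  define cE where "cE = (\<lambda>j. card {P. ordered_equipartition n j P})"
  have E0': "E \<ge> 0" using E0 E_def by simp
  have k1: "k + 1 > 0" by simp
  have ce1: "cE k * Pk n k = fact n" using card_EQ[OF k] unfolding cE_def Pk_def .
  have ce2: "cE (k+1) * Pk n (k+1) = fact n" using card_EQ[OF k1] unfolding cE_def Pk_def .
  have Pkpos: "Pk n (k+1) > 0" using ce2 by (metis fact_gt_zero mult_is_0 neq0_conv)
  have cEpos: "cE k > 0" using ce1 by (metis fact_gt_zero mult_is_0 neq0_conv)
  have "cE k * Pk n (k+1) \<le> cE k * Pk n k" using Pk_mono[OF k qk] by simp
  then have "cE k * Pk n (k+1) \<le> cE (k+1) * Pk n (k+1)" using ce1 ce2 by simp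
  then have cEmono: "cE k \<le> cE (k+1)" using Pkpos by simp
  have mN: "m < N"
  proof -
    have "real m \<le> p * real N" using m_of_bounds[OF p, of n] unfolding m_def N_def by simp
    also have "\<dots> < real N" using p N0 unfolding N_def by simp
    finally show ?thesis by simp
  qed
  have Fdiff: "real Fc - real Fa \<ge> E" using Fk_diff[OF k qk] unfolding E_def Fc_def Fa_def .
  then have FaFc: "Fa \<le> Fc" using E0' by simp
  define D where "D = Fc - Fa"
  have Dr: "real D \<ge> E" using Fdiff FaFc unfolding D_def by (simp add: of_nat_diff)
  define M where "M = N - Fc"
  have mM: "m \<le> M" using mle unfolding M_def m_def N_def Fc_def by simp
  have MD: "M + D = N - Fa" using mle FaFc unfolding M_def D_def N_def Fc_def m_def by simp
  have g: "real (M choose m) * (real N / real (N - m)) ^ D \<le> real ((M + D) choose m)"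
    by (rule binom_grow) (use mM mN MD in auto)
  have Bpos: "real (M choose m) > 0" using mM by simp
  define g where "g = real (card (graphs_nm n m))"
  have gpos: "g > 0" unfolding g_def card_graphs using mN unfolding N_def by simp
  have mu1: "mu p n k = real (cE k) * real (M choose m) / g"
    using mu_formula[OF k, of p n] gpos unfolding g_def cE_def M_def N_def Fc_def m_def
    by (simp add: field_simps)
  have mu2: "mu p n (k+1) = real (cE (k+1)) * real ((M + D) choose m) / g"
    using mu_formula[OF k1, of p n] gpos unfolding g_def cE_def MD N_def Fa_def m_def
    by (simp add: field_simps)
  have ratio: "mu p n (k+1) / mu p n k = (real (cE (k+1)) / real (cE k)) * (real ((M + D) choose m) / real (M choose m))"
    unfolding mu1 mu2 using gpos by (simp add: field_simps)
  define r where "r = real N / real (N - m)"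
  have rpos: "r > 0" unfolding r_def using mN by simp
  have r1: "r \<ge> 1" unfolding r_def using mN by simp
  have R1: "real ((M + D) choose m) / real (M choose m) \<ge> r ^ D"
    using g Bpos unfolding r_def by (simp add: field_simps)
  have R2: "real (cE (k+1)) / real (cE k) \<ge> 1" using cEmono cEpos by simp
  have rD: "r ^ D \<ge> r powr E"
  proof -
    have "r powr E \<le> r powr (real D)" by (rule powr_mono[OF Dr r1])
    also have "\<dots> = r ^ D" using rpos by (simp add: powr_realpow)
    finally show ?thesis .
  qed
  define t where "t = (1 - p) * real N / real (N - m)"
  have Npos: "real N > 0" using N0 unfolding N_def by simp
  have tpos: "t > 0" unfolding t_def using p mN by simp
  have tr: "t = (1 - p) * r" unfolding t_def r_def by simp
  have rbt: "r = b * t" unfolding tr b_def using p by simp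
  have bpos: "b > 0" unfolding b_def using p by simp
  have tE: "t powr E \<ge> 1 - E / ((1 - p) * real N)"
  proof -
    have mb: "real m > p * real N - 1" using m_of_bounds[OF p, of n] unfolding m_def N_def by simp
    have inv: "1 / t = (real N - real m) / ((1 - p) * real N)"
      unfolding t_def using mN p by (simp add: of_nat_diff field_simps)
    have "1 / t < 1 + 1 / ((1 - p) * real N)"
    proof -
      have "(real N - real m) < (1 - p) * real N + 1" using mb by (simp add: algebra_simps)
      then have "(real N - real m) / ((1 - p) * real N) < ((1 - p) * real N + 1) / ((1 - p) * real N)"
        using p Npos by (intro divide_strict_right_mono) auto
      also have "\<dots> = 1 + 1 / ((1 - p) * real N)" using p Npos by (simp add: field_simps)
      finally show ?thesis using inv by simp
    qed
    moreover have "ln (1 / t) \<le> 1 / t - 1" using tpos by (intro ln_le_minus_one) simp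
    ultimately have lnt: "ln t \<ge> - 1 / ((1 - p) * real N)" using tpos by (simp add: ln_div)
    have "E * ln t \<ge> E * (- 1 / ((1 - p) * real N))" using lnt E0' by (rule mult_left_mono)
    then have "E * ln t \<ge> - (E / ((1 - p) * real N))" by simp
    moreover have "t powr E = exp (E * ln t)" using tpos by (simp add: powr_def mult.commute)
    moreover have "exp (E * ln t) \<ge> 1 + E * ln t" by (rule exp_ge_add_one_self)
    ultimately show ?thesis by linarith
  qed
  have "r powr E = b powr E * t powr E" unfolding rbt using bpos tpos by (simp add: powr_mult)
  also have "\<dots> \<ge> b powr E * (1 - E / ((1 - p) * real N))" using tE by (intro mult_left_mono) auto
  finally have rE: "r powr E \<ge> (1 - E / ((1 - p) * real N)) * b powr E" by (simp add: mult.commute)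
  have "mu p n (k+1) / mu p n k \<ge> 1 * r ^ D"
    unfolding ratio using R1 R2 rpos by (intro mult_mono) auto
  then have "mu p n (k+1) / mu p n k \<ge> (1 - E / ((1 - p) * real N)) * b powr E" using rD rE by linarith
  then show ?thesis unfolding E_def N_def b_def .
qed



lemma real_choose2: "real (n choose 2) = real n * (real n - 1) / 2"
proof -
  have "real (2 * (n choose 2) + n) = real (n * n)" using two_choose[of n] by (rule arg_cong)
  then have "2 * real (n choose 2) + real n = real n * real n" by simp
  then show ?thesis by (simp add: algebra_simps)
qed

lemma cond_lemma:
  fixes p U :: real and n k :: nat
  assumes p: "0 < p" "p < 1" and n3: "n \<ge> 3" and k: "k > 0"
    and L2: "2 \<le> real n / real k" and LU: "real n / real k \<le> U"
    and U1: "U \<le> (1 - p) * (real n - 1)" and U2: "U^2 < real n"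
  shows "n div k < k" "m_of p n + Fk n k \<le> n choose 2"
    "0 \<le> (real n)^2 / (2 * real k * real (k+1)) - real n / (2 * real k)"
    "n choose 2 > 0"
    "- ((real n)^2 / (2 * real k * real (k+1)) - real n / (2 * real k)) / ((1 - p) * real (n choose 2)) \<le> 0"
    "- (U^2 / ((1 - p) * (real n * (real n - 1)))) \<le> - ((real n)^2 / (2 * real k * real (k+1)) - real n / (2 * real k)) / ((1 - p) * real (n choose 2))"
proof -
  define L where "L = real n / real k"
  have kp: "real k > 0" using k by simp
  have np: "real n \<ge> 3" using n3 by simp
  have Upos: "U \<ge> 2" using L2 LU by simp
  have nL: "real n = L * real k" unfolding L_def using kp by simp
  have "U * U < real n" using U2 by (simp add: power2_eq_square)
  also have "\<dots> \<le> U * real k" using LU kp by (simp add: pos_divide_le_eq)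
  finally have Uk: "U < real k" using Upos by simp
  have "real (n div k) \<le> real n / real k" by (rule of_nat_div_le_of_nat)
  then have "real (n div k) < real k" using LU Uk by linarith
  then show "n div k < k" by simp
  have N: "real (n choose 2) = real n * (real n - 1) / 2" by (rule real_choose2)
  have Npos: "real (n choose 2) > 0" unfolding N using np by simp
  then show "n choose 2 > 0" by simp
  have ff: "k * (2 * Fk n k + n) = n * n + (n mod k) * (k - n mod k)" by (rule Fk_formula[OF k])
  have "(n mod k) * (k - n mod k) \<le> n * k" by (intro mult_le_mono) auto
  have "real k * (2 * real (Fk n k) + real n) \<le> real n * real n + real n * real k"
  proof -
    have "k * (2 * Fk n k + n) \<le> n * n + n * k" using ff \<open>(n mod k) * (k - n mod k) \<le> n * k\<close> by simp
    then have "real (k * (2 * Fk n k + n)) \<le> real (n * n + n * k)" by (simp only: of_nat_le_iff)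
    then show ?thesis by simp
  qed
  then have "real k * (2 * real (Fk n k)) \<le> real n * real n" by (simp add: algebra_simps)
  then have "2 * real (Fk n k) \<le> real n * L" unfolding L_def using kp by (simp add: field_simps)
  also have "\<dots> \<le> real n * U" using LU L_def np by (intro mult_left_mono) auto
  also have "\<dots> \<le> real n * ((1 - p) * (real n - 1))" using U1 np by (intro mult_left_mono) auto
  finally have F2: "2 * real (Fk n k) \<le> real n * ((1 - p) * (real n - 1))" .
  have "real (m_of p n) \<le> p * real (n choose 2)" using m_of_bounds[OF p] by simp
  then have "real (m_of p n) + real (Fk n k) \<le> real (n choose 2)"
    using F2 unfolding N by (simp add: algebra_simps)
  then show "m_of p n + Fk n k \<le> n choose 2" by linarith
  have nk: "real n \<ge> real k + 1" using L2 kp unfolding L_def by (simp add: field_simps)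
  have f1: "(real n)^2 / (2 * real k * real (k+1)) = (real n / (2 * real k)) * (real n / real (k+1))"
    by (simp add: power2_eq_square)
  have f2: "real n / real (k+1) \<ge> 1" using nk by simp
  have a0: "real n / (2 * real k) \<ge> 0" by simp
  have "(real n / (2 * real k)) * 1 \<le> (real n / (2 * real k)) * (real n / real (k+1))"
    using f2 a0 by (rule mult_left_mono)
  then show E0: "0 \<le> (real n)^2 / (2 * real k * real (k+1)) - real n / (2 * real k)"
    unfolding f1 by simp
  show "- ((real n)^2 / (2 * real k * real (k+1)) - real n / (2 * real k)) / ((1 - p) * real (n choose 2)) \<le> 0"
  proof -
    have "0 \<le> ((real n)^2 / (2 * real k * real (k+1)) - real n / (2 * real k)) / ((1 - p) * real (n choose 2))"
      using E0 Npos p by (intro divide_nonneg_pos) auto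
    then show ?thesis by (metis minus_divide_left neg_le_0_iff_le)
  qed
  have Ele: "(real n)^2 / (2 * real k * real (k+1)) - real n / (2 * real k) \<le> U^2 / 2"
  proof -
    have "(real n)^2 / (2 * real k * real (k+1)) - real n / (2 * real k) \<le> (real n)^2 / (2 * real k * real (k+1))"
      using np kp by simp
    also have "\<dots> \<le> (real n)^2 / (2 * real k * real k)"
      using kp by (intro divide_left_mono mult_left_mono) auto
    also have "\<dots> = L^2 / 2" unfolding L_def by (simp add: power2_eq_square)
    also have "\<dots> \<le> U^2 / 2" using LU L2 L_def by (simp add: power_mono)
    finally show ?thesis .
  qed
  have den: "(1 - p) * real (n choose 2) = (1 - p) * (real n * (real n - 1)) / 2" unfolding N by simp
  have dpos: "(1 - p) * (real n * (real n - 1)) > 0" using p np by simp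
  have "((real n)^2 / (2 * real k * real (k+1)) - real n / (2 * real k)) / ((1 - p) * real (n choose 2))
      \<le> (U^2 / 2) / ((1 - p) * (real n * (real n - 1)) / 2)"
    unfolding den using Ele dpos by (intro divide_right_mono) auto
  also have "\<dots> = U^2 / ((1 - p) * (real n * (real n - 1)))" by simp
  finally show "- (U^2 / ((1 - p) * (real n * (real n - 1)))) \<le> - ((real n)^2 / (2 * real k * real (k+1)) - real n / (2 * real k)) / ((1 - p) * real (n choose 2))"
    by (metis minus_divide_left neg_le_iff_le)
qed



theorem lemma2:
  fixes p b :: real and \<gamma> :: "nat \<Rightarrow> real" and k :: "nat \<Rightarrow> nat"
  assumes "0 < p" and "p < 1 - 1 / exp 2"
    and "b = 1 / (1 - p)"
    and "\<And>n. \<gamma> n = 2 * log b (real n) - 2 * log b (log b (real n)) - 2 * log b 2"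
    and "\<And>n. k n > 0"
    and "(\<lambda>n. real n / real (k n) - \<gamma> n) \<in> O(\<lambda>_. 1)"
  shows "\<exists>\<epsilon> :: nat \<Rightarrow> real. \<epsilon> \<longlonglongrightarrow> 0 \<and>
    (\<forall>\<^sub>F n in at_top. mu p n (k n + 1) / mu p n (k n) \<ge>
       (1 + \<epsilon> n) * b powr ((real n)\<^sup>2 / (2 * real (k n) * real (k n + 1)) - real n / (2 * real (k n))))"
proof -
  have p0: "0 < p" by (rule assms(1))
  have "1 / exp 2 > (0::real)" by simp
  then have p1: "p < 1" using assms(2) by linarith
  have b1: "b > 1" unfolding assms(3) using p0 p1 by simp
  define lb where "lb = ln b"
  have lbpos: "lb > 0" unfolding lb_def using b1 by simp
  have gfun: "\<gamma> = (\<lambda>n. 2 * (ln (real n) / lb) - 2 * (ln (ln (real n) / lb) / lb) - 2 * (ln 2 / lb))"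
    by (rule ext) (simp add: assms(4) lb_def log_def)
  obtain C where C: "C > 0" and evC: "eventually (\<lambda>n. norm (real n / real (k n) - \<gamma> n) \<le> C * norm (1::real)) at_top"
    using landau_o.bigE[OF assms(6)] by blast
  define U where "U = (\<lambda>n::nat. 2 * ln (real n) / lb + C)"
  have lim: "filterlim \<gamma> at_top at_top" unfolding gfun using lbpos by real_asymp
  have ev1: "eventually (\<lambda>n. C + 2 \<le> \<gamma> n) at_top" using lim by (simp add: filterlim_at_top)
  have ev2: "eventually (\<lambda>n. \<gamma> n \<le> 2 * ln (real n) / lb) at_top" unfolding gfun using lbpos by real_asymp
  have ev3: "eventually (\<lambda>n. U n \<le> (1 - p) * (real n - 1)) at_top" unfolding U_def using lbpos p1 by real_asymp
  have ev4: "eventually (\<lambda>n. (U n)^2 < real n) at_top" unfolding U_def using lbpos by real_asymp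
  have ev5: "eventually (\<lambda>n::nat. n \<ge> 3) at_top" by (rule eventually_ge_at_top)
  have evall: "eventually (\<lambda>n. n \<ge> 3 \<and> 2 \<le> real n / real (k n) \<and> real n / real (k n) \<le> U n \<and>
      U n \<le> (1 - p) * (real n - 1) \<and> (U n)^2 < real n) at_top"
    using evC ev1 ev2 ev3 ev4 ev5
  proof eventually_elim
    case (elim n)
    then show ?case unfolding U_def by auto
  qed
  define E where "E = (\<lambda>n. (real n)\<^sup>2 / (2 * real (k n) * real (k n + 1)) - real n / (2 * real (k n)))"
  define \<epsilon> where "\<epsilon> = (\<lambda>n. - E n / ((1 - p) * real (n choose 2)))"
  have evcond: "eventually (\<lambda>n. - ((U n)^2 / ((1 - p) * (real n * (real n - 1)))) \<le> \<epsilon> n \<and> \<epsilon> n \<le> 0 \<and>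
      mu p n (k n + 1) / mu p n (k n) \<ge> (1 + \<epsilon> n) * b powr (E n)) at_top"
    using evall
  proof eventually_elim
    case (elim n)
    have kn: "k n > 0" by (rule assms(5))
    from elim have n3: "n \<ge> 3" and L2: "2 \<le> real n / real (k n)" and LU: "real n / real (k n) \<le> U n"
      and U1: "U n \<le> (1 - p) * (real n - 1)" and U2: "(U n)^2 < real n" by auto
    note c = cond_lemma[where U = "U n" and n = n and k = "k n", OF p0 p1 n3 kn L2 LU U1 U2]
    have rb: "mu p n (k n + 1) / mu p n (k n) \<ge>
      (1 - E n / ((1 - p) * real (n choose 2))) * (1 / (1 - p)) powr (E n)"
      unfolding E_def by (rule ratio_bound[OF p0 p1 kn c(1) c(2) c(3) c(4)])
    have e1: "1 + \<epsilon> n = 1 - E n / ((1 - p) * real (n choose 2))" unfolding \<epsilon>_def by simp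
    have s1: "- ((U n)^2 / ((1 - p) * (real n * (real n - 1)))) \<le> \<epsilon> n"
      unfolding \<epsilon>_def E_def by (rule c(6))
    have s2: "\<epsilon> n \<le> 0" unfolding \<epsilon>_def E_def by (rule c(5))
    have s3: "mu p n (k n + 1) / mu p n (k n) \<ge> (1 + \<epsilon> n) * b powr (E n)"
      unfolding e1 assms(3) by (rule rb)
    show ?case using s1 s2 s3 by blast
  qed
  show ?thesis
  proof (intro exI conjI)
    show "\<epsilon> \<longlonglongrightarrow> 0"
    proof (rule tendsto_sandwich[of "\<lambda>n. - ((U n)^2 / ((1 - p) * (real n * (real n - 1))))" _ _ "\<lambda>n. 0"])
      show "eventually (\<lambda>n. - ((U n)^2 / ((1 - p) * (real n * (real n - 1)))) \<le> \<epsilon> n) sequentially"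
        using evcond by (auto elim: eventually_mono)
      show "eventually (\<lambda>n. \<epsilon> n \<le> 0) sequentially"
        using evcond by (auto elim: eventually_mono)
      show "(\<lambda>n. - ((U n)^2 / ((1 - p) * (real n * (real n - 1))))) \<longlonglongrightarrow> 0"
        unfolding U_def using lbpos p1 by real_asymp
      show "(\<lambda>n. 0::real) \<longlonglongrightarrow> 0" by simp
    qed
    show "\<forall>\<^sub>F n in at_top. mu p n (k n + 1) / mu p n (k n) \<ge>
       (1 + \<epsilon> n) * b powr ((real n)\<^sup>2 / (2 * real (k n) * real (k n + 1)) - real n / (2 * real (k n)))"
      using evcond unfolding E_def by (auto elim: eventually_mono)
  qed
qed

end
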